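(* In the setting below, if $\varphi,\psi\in X_N$ satisfy $\mathrm{dist}_\infty(\mathrm{supp}\,\varphi,\mathrm{supp}\,\psi)>l-1$, then $$\langle\mathcal{T}\varphi,\psi\rangle=\langle\mathcal{T}'\varphi,\psi\rangle=\langle\mathcal{R}\varphi,\psi\rangle=\langle\mathcal{R}'\varphi,\psi\rangle=0.$$
   Context: Standing: $d\ge2$, $m\ge1$, $L\ge3$ odd, $N\ge1$. $\mathbb{T}_N=(\mathbb{Z}/L^N\mathbb{Z})^d$; $\rho_\infty(x,y)=\min\{|x-y+z|_\infty:z\in(L^N\mathbb{Z})^d\}$; $\mathrm{dist}_\infty(M_1,M_2)=\min\{\rho_\infty(x,y):x\in M_1,y\in M_2\}$. $X_N$: maps $\mathbb{T}_N\to\mathbb{R}^m$ with zero sum, $\langle\varphi,\psi\rangle=\sum_x\langle\varphi(x),\psi(x)\rangle$. $(\nabla_j\varphi)(x)=\varphi(x+e_j)-\varphi(x)$. $A:\mathbb{R}^{m\times d}\to\mathbb{R}^{m\times d}$ linear, symmetric, $(AF,F)\ge c_0|F|^2$, $c_0>0$; $(\varphi,\psi)_+=\sum_x(A\nabla\varphi(x),\nabla\psi(x))$. Let $l\ge3$ be an integer with $l-1<L^N$, $Q=\{1,\dots,l-1\}^d$. $\Pi_x$ is the $(\cdot,\cdot)_+$-orthogonal projection of $X_N$ onto $\{\varphi\in X_N:\varphi=0\text{ outside }Q+x\}$; $\mathcal{T}=l^{-d}\sum_x\Pi_x$, $\mathcal{R}=\mathrm{id}-\mathcal{T}$; $\mathcal{T}',\mathcal{R}'$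 are the adjoints with respect to $\langle\cdot,\cdot\rangle$. *)

theory Defs
  imports "HOL-Analysis.Analysis" "HOL-Library.Extended_Real"
begin

text \<open>The torus (Z / M Z)^d with M = L^N is modelled by M-periodic functions on Z^d;
  points of Z^d are int vectors indexed by the finite type 'd; R^m is real^'m;
  m x d matrices are real^'d^'m with the Frobenius inner product.\<close>

definition ej :: "'d::finite \<Rightarrow> int^'d" where
  "ej j = (\<chi> i. if i = j then 1 else 0)"

definition periodic_tor :: "nat \<Rightarrow> (int^'d::finite \<Rightarrow> 'a) \<Rightarrow> bool" where
  "periodic_tor M f \<longleftrightarrow> (\<forall>x j. f (x + of_nat M * ej j) = f x)"

definition tbox :: "nat \<Rightarrow> (int^'d::finite) set" where
  "tbox M = {x. \<forall>j. 0 \<le> x$j \<and> x$j < int M}"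

definition XN :: "nat \<Rightarrow> (int^'d::finite \<Rightarrow> real^'m::finite) set" where
  "XN M = {\<phi>. periodic_tor M \<phi> \<and> (\<Sum>x\<in>tbox M. \<phi> x) = 0}"

definition ip :: "nat \<Rightarrow> (int^'d::finite \<Rightarrow> real^'m::finite) \<Rightarrow> (int^'d \<Rightarrow> real^'m) \<Rightarrow> real" where
  "ip M \<phi> \<psi> = (\<Sum>x\<in>tbox M. \<phi> x \<bullet> \<psi> x)"

definition grad :: "(int^'d::finite \<Rightarrow> real^'m::finite) \<Rightarrow> int^'d \<Rightarrow> real^'d^'m" where
  "grad \<phi> x = (\<chi> i. \<chi> j. (\<phi> (x + ej j) - \<phi> x) $ i)"

definition ipA :: "(real^'d^'m \<Rightarrow> real^'d^'m) \<Rightarrow> nat \<Rightarrow>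
    (int^'d::finite \<Rightarrow> real^'m::finite) \<Rightarrow> (int^'d \<Rightarrow> real^'m) \<Rightarrow> real" where
  "ipA A M \<phi> \<psi> = (\<Sum>x\<in>tbox M. A (grad \<phi> x) \<bullet> grad \<psi> x)"

definition cong_tor :: "nat \<Rightarrow> int^'d::finite \<Rightarrow> int^'d \<Rightarrow> bool" where
  "cong_tor M x y \<longleftrightarrow> (\<forall>j. x$j mod int M = y$j mod int M)"

definition cubeQ :: "nat \<Rightarrow> (int^'d::finite) set" where
  "cubeQ l = {q. \<forall>j. 1 \<le> q$j \<and> q$j \<le> int l - 1}"

definition Vsub :: "nat \<Rightarrow> nat \<Rightarrow> int^'d::finite \<Rightarrow> (int^'d \<Rightarrow> real^'m::finite) set" where
  "Vsub M l x = {\<phi> \<in> XN M. \<forall>y. (\<not> (\<exists>q\<in>cubeQ l. cong_tor M y (q + x))) \<longrightarrow> \<phi> y = 0}"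

definition Proj :: "(real^'d^'m \<Rightarrow> real^'d^'m) \<Rightarrow> nat \<Rightarrow> nat \<Rightarrow> int^'d::finite \<Rightarrow>
    (int^'d \<Rightarrow> real^'m::finite) \<Rightarrow> (int^'d \<Rightarrow> real^'m)" where
  "Proj A M l x \<phi> = (THE \<psi>. \<psi> \<in> Vsub M l x \<and>
      (\<forall>\<eta>\<in>Vsub M l x. ipA A M (\<lambda>y. \<phi> y - \<psi> y) \<eta> = 0))"

definition Top :: "(real^'d^'m \<Rightarrow> real^'d^'m) \<Rightarrow> nat \<Rightarrow> nat \<Rightarrow>
    (int^'d::finite \<Rightarrow> real^'m::finite) \<Rightarrow> (int^'d \<Rightarrow> real^'m)" where
  "Top A M l \<phi> = (\<lambda>y. (1 / real l ^ CARD('d)) *\<^sub>R (\<Sum>x\<in>tbox M. Proj A M l x \<phi> y))"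

definition Rop :: "(real^'d^'m \<Rightarrow> real^'d^'m) \<Rightarrow> nat \<Rightarrow> nat \<Rightarrow>
    (int^'d::finite \<Rightarrow> real^'m::finite) \<Rightarrow> (int^'d \<Rightarrow> real^'m)" where
  "Rop A M l \<phi> = (\<lambda>y. \<phi> y - Top A M l \<phi> y)"

definition adj :: "nat \<Rightarrow> ((int^'d::finite \<Rightarrow> real^'m::finite) \<Rightarrow> (int^'d \<Rightarrow> real^'m)) \<Rightarrow>
    (int^'d \<Rightarrow> real^'m) \<Rightarrow> (int^'d \<Rightarrow> real^'m)" where
  "adj M Op \<phi> = (THE \<eta>. \<eta> \<in> XN M \<and> (\<forall>\<psi>\<in>XN M. ip M \<eta> \<psi> = ip M \<phi> (Op \<psi>)))"

definition supnorm :: "int^'d::finite \<Rightarrow> int" where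
  "supnorm v = Max (range (\<lambda>j. \<bar>v$j\<bar>))"

definition rho :: "nat \<Rightarrow> int^'d::finite \<Rightarrow> int^'d \<Rightarrow> int" where
  "rho M x y = Inf {supnorm (x - y + of_nat M * z) | z. True}"

definition suppT :: "nat \<Rightarrow> (int^'d::finite \<Rightarrow> real^'m::finite) \<Rightarrow> (int^'d) set" where
  "suppT M \<phi> = {x \<in> tbox M. \<phi> x \<noteq> 0}"

text \<open>dist_inf, with the usual convention min of the empty set = infinity.\<close>
definition dist_inf :: "nat \<Rightarrow> (int^'d::finite) set \<Rightarrow> (int^'d) set \<Rightarrow> ereal" where
  "dist_inf M S1 S2 = Inf {ereal (real_of_int (rho M x y)) | x y. x \<in> S1 \<and> y \<in> S2}"

end

theory Submission
  imports Defs
begin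



definition vmod :: "nat \<Rightarrow> int^'d::finite \<Rightarrow> int^'d" where
  "vmod M w = (\<chi> j. w$j mod int M)"

definition sh :: "'d::finite \<Rightarrow> int \<Rightarrow> int^'d" where
  "sh j k = (\<chi> i. if i = j then k else 0)"

lemma cong_tor_iff_dvd: "cong_tor M u w \<longleftrightarrow> (\<forall>j. int M dvd (u$j - w$j))"
  by (simp add: cong_tor_def mod_eq_dvd_iff)

lemma cong_refl: "cong_tor M u u" by (simp add: cong_tor_def)
lemma cong_sym: "cong_tor M u w \<Longrightarrow> cong_tor M w u" by (simp add: cong_tor_def)
lemma cong_trans: "cong_tor M u v \<Longrightarrow> cong_tor M v w \<Longrightarrow> cong_tor M u w" by (simp add: cong_tor_def)
lemma cong_add: "cong_tor M u v \<Longrightarrow> cong_tor M (u + w) (v + w)"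
  by (simp add: cong_tor_iff_dvd)
lemma cong_diff: "cong_tor M a c \<Longrightarrow> cong_tor M b d \<Longrightarrow> cong_tor M (a - b) (c - d)"
proof -
  assume "cong_tor M a c" "cong_tor M b d"
  then have "\<forall>j. int M dvd ((a$j - c$j) - (b$j - d$j))" by (simp add: cong_tor_iff_dvd)
  then show ?thesis by (simp add: cong_tor_iff_dvd algebra_simps)
qed
lemma vmod_cong: "cong_tor M (vmod M w) w" by (simp add: cong_tor_def vmod_def)
lemma vmod_tbox: "M > 0 \<Longrightarrow> vmod M w \<in> tbox M" by (simp add: tbox_def vmod_def)
lemma tbox_vmod: "w \<in> tbox M \<Longrightarrow> vmod M w = w" by (simp add: tbox_def vmod_def vec_eq_iff)
lemma cong_vmod_eq: "cong_tor M u w \<longleftrightarrow> vmod M u = vmod M w"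
  by (simp add: cong_tor_def vmod_def vec_eq_iff)
lemma tbox_cong_unique: "u \<in> tbox M \<Longrightarrow> w \<in> tbox M \<Longrightarrow> cong_tor M u w \<Longrightarrow> u = w"
  by (metis cong_vmod_eq tbox_vmod)

lemma ej_M: "of_nat M * ej j = sh j (int M)"
  by (simp add: vec_eq_iff ej_def sh_def of_nat_index)

lemma sh_zero[simp]: "sh j 0 = 0" by (simp add: vec_eq_iff sh_def)
lemma sh_add: "sh j (a + b) = sh j a + sh j b" by (simp add: vec_eq_iff sh_def)
lemma sh_neg: "sh j (- a) = - sh j a" by (simp add: vec_eq_iff sh_def)

lemma periodic_sh_nat:
  assumes "periodic_tor M \<phi>" shows "\<phi> (x + sh j (int n * int M)) = \<phi> x"
proof (induction n arbitrary: x)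
  case 0 then show ?case by simp
next
  case (Suc n)
  have P: "\<phi> (y + sh j (int M)) = \<phi> y" for y
    using assms unfolding periodic_tor_def ej_M by simp
  have "x + sh j (int (Suc n) * int M) = (x + sh j (int n * int M)) + sh j (int M)"
    by (simp add: sh_add[symmetric] algebra_simps)
  then show ?case using P[of "x + sh j (int n * int M)"] Suc[of x] by metis
qed

lemma periodic_sh:
  assumes "periodic_tor M \<phi>" shows "\<phi> (x + sh j (k * int M)) = \<phi> x"
proof (cases "k \<ge> 0")
  case True then show ?thesis using periodic_sh_nat[OF assms, of x j "nat k"] by simp
next
  case False
  have "\<phi> ((x + sh j (k * int M)) + sh j (int (nat (-k)) * int M)) = \<phi> (x + sh j (k * int M))"
    by (rule periodic_sh_nat[OF assms])
  moreover have "(x + sh j (k * int M)) + sh j (int (nat (-k)) * int M) = x"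
  proof -
    have "sh j (k * int M) + sh j (int (nat (-k)) * int M) = sh j 0"
      unfolding sh_add[symmetric] using False by (simp add: algebra_simps)
    then show ?thesis by (metis add.assoc add.right_neutral sh_zero)
  qed
  ultimately show ?thesis by metis
qed

lemma periodic_sum:
  assumes "periodic_tor M \<phi>" "finite S"
  shows "\<phi> (x + (\<Sum>j\<in>S. sh j (k j * int M))) = \<phi> x"
  using assms(2)
proof (induction S arbitrary: x)
  case empty then show ?case by simp
next
  case (insert a S)
  have "x + (\<Sum>j\<in>insert a S. sh j (k j * int M)) = (x + (\<Sum>j\<in>S. sh j (k j * int M))) + sh a (k a * int M)"
    using insert by (simp add: algebra_simps)
  then show ?case using insert(3)[of x] periodic_sh[OF assms(1), of "x + (\<Sum>j\<in>S. sh j (k j * int M))" a "k a"] by (simp add: add.assoc)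
qed

lemma periodic_vmod:
  assumes "periodic_tor M \<phi>" shows "\<phi> w = \<phi> (vmod M w)"
proof -
  have "w = vmod M w + (\<Sum>j\<in>UNIV. sh j ((w$j div int M) * int M))"
    by (simp add: vec_eq_iff vmod_def sh_def sum_component mod_div_mult_eq)
  then show ?thesis using periodic_sum[OF assms, of UNIV "vmod M w" "\<lambda>j. w$j div int M"] by simp
qed

lemma periodic_cong:
  assumes "periodic_tor M \<phi>" "cong_tor M u w" shows "\<phi> u = \<phi> w"
  by (metis assms periodic_vmod cong_vmod_eq)



definition lspan :: "('i \<Rightarrow> ('a \<Rightarrow> 'b::real_vector)) \<Rightarrow> 'i set \<Rightarrow> ('a \<Rightarrow> 'b) set" where
  "lspan g I = {(\<lambda>y. \<Sum>k\<in>I. c k *\<^sub>R g k y) | c. True}"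

definition lin :: "(('a \<Rightarrow> 'b::real_vector) \<Rightarrow> real) \<Rightarrow> bool" where
  "lin f \<longleftrightarrow> (\<forall>\<alpha> \<beta> u v. f (\<lambda>y. \<alpha> *\<^sub>R u y + \<beta> *\<^sub>R v y) = \<alpha> * f u + \<beta> * f v)"

lemma lspan_lc:
  assumes "u \<in> lspan g I" "v \<in> lspan g I"
  shows "(\<lambda>y. \<alpha> *\<^sub>R u y + \<beta> *\<^sub>R v y) \<in> lspan g I"
proof -
  obtain c1 c2 where u: "u = (\<lambda>y. \<Sum>k\<in>I. c1 k *\<^sub>R g k y)" and v: "v = (\<lambda>y. \<Sum>k\<in>I. c2 k *\<^sub>R g k y)"
    using assms by (auto simp: lspan_def)
  have "(\<lambda>y. \<alpha> *\<^sub>R u y + \<beta> *\<^sub>R v y) = (\<lambda>y. \<Sum>k\<in>I. (\<alpha> * c1 k + \<beta> * c2 k) *\<^sub>R g k y)"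
    by (simp add: u v fun_eq_iff scaleR_sum_right scaleR_add_left sum.distrib)
  then show ?thesis by (auto simp: lspan_def)
qed

lemma lspan_zero: "(\<lambda>y. 0) \<in> lspan g I"
  unfolding lspan_def by (rule CollectI, rule exI[of _ "\<lambda>k. 0"]) simp

lemma lspan_insert:
  assumes "a \<notin> I" "finite I"
  shows "w \<in> lspan g (insert a I) \<longleftrightarrow> (\<exists>u\<in>lspan g I. \<exists>t. w = (\<lambda>y. u y + t *\<^sub>R g a y))"
proof
  assume "w \<in> lspan g (insert a I)"
  then obtain c where "w = (\<lambda>y. \<Sum>k\<in>insert a I. c k *\<^sub>R g k y)" by (auto simp: lspan_def)
  then have "w = (\<lambda>y. (\<Sum>k\<in>I. c k *\<^sub>R g k y) + c a *\<^sub>R g a y)" using assms by (simp add: add.commute)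
  moreover have "(\<lambda>y. (\<Sum>k\<in>I. c k *\<^sub>R g k y)) \<in> lspan g I" by (auto simp: lspan_def)
  ultimately show "\<exists>u\<in>lspan g I. \<exists>t. w = (\<lambda>y. u y + t *\<^sub>R g a y)"
    by (intro bexI[of _ "\<lambda>y. \<Sum>k\<in>I. c k *\<^sub>R g k y"] exI[of _ "c a"]) auto
next
  assume "\<exists>u\<in>lspan g I. \<exists>t. w = (\<lambda>y. u y + t *\<^sub>R g a y)"
  then obtain c t where w: "w = (\<lambda>y. (\<Sum>k\<in>I. c k *\<^sub>R g k y) + t *\<^sub>R g a y)" by (auto simp: lspan_def)
  define c' where "c' = c(a := t)"
  have "(\<Sum>k\<in>I. c k *\<^sub>R g k y) = (\<Sum>k\<in>I. c' k *\<^sub>R g k y)" for y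
    using assms(1) by (intro sum.cong) (auto simp: c'_def)
  then have "w = (\<lambda>y. \<Sum>k\<in>insert a I. c' k *\<^sub>R g k y)" using assms by (simp add: w c'_def add.commute)
  then show "w \<in> lspan g (insert a I)" by (auto simp: lspan_def)
qed

lemma lspan_mono_insert:
  assumes "u \<in> lspan g I" "finite I" shows "u \<in> lspan g (insert a I)"
proof (cases "a \<in> I")
  case True then show ?thesis using assms by (simp add: insert_absorb)
next
  case False
  have "u = (\<lambda>y. u y + 0 *\<^sub>R g a y)" by simp
  then show ?thesis using lspan_insert[OF False assms(2)] assms(1) by blast
qed

lemma lin_zero: assumes "lin f" shows "f (\<lambda>y. 0) = 0"
  using assms[unfolded lin_def, rule_format, of 0 "\<lambda>y. 0" 0 "\<lambda>y. 0"] by simp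

lemma lin_sum:
  assumes "lin f" "finite K"
  shows "f (\<lambda>y. \<Sum>k\<in>K. c k *\<^sub>R h k y) = (\<Sum>k\<in>K. c k * f (h k))"
  using assms(2)
proof (induction K)
  case empty then show ?case using lin_zero[OF assms(1)] by simp
next
  case (insert a K)
  have "f (\<lambda>y. \<Sum>k\<in>insert a K. c k *\<^sub>R h k y) = f (\<lambda>y. c a *\<^sub>R h a y + 1 *\<^sub>R (\<Sum>k\<in>K. c k *\<^sub>R h k y))"
    using insert by simp
  also have "\<dots> = c a * f (h a) + 1 * f (\<lambda>y. \<Sum>k\<in>K. c k *\<^sub>R h k y)"
    by (rule assms(1)[unfolded lin_def, rule_format])
  finally show ?case using insert by simp
qed

lemma riesz:
  fixes B :: "('a \<Rightarrow> 'b::real_vector) \<Rightarrow> ('a \<Rightarrow> 'b) \<Rightarrow> real"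
  assumes fin: "finite I"
    and Blin: "\<forall>w. lin (\<lambda>u. B u w)" and Bsym: "\<forall>u v. B u v = B v u"
  shows "(\<forall>v\<in>lspan g I. B v v = 0 \<longrightarrow> v = (\<lambda>y. 0)) \<longrightarrow>
     (\<forall>f. lin f \<longrightarrow> (\<exists>v\<in>lspan g I. \<forall>w\<in>lspan g I. B v w = f w))"
  using fin
proof (induction I)
  case empty
  have "lspan g {} = {\<lambda>y. 0}" by (auto simp: lspan_def)
  moreover have "B (\<lambda>y. 0) (\<lambda>y. 0) = 0" using lin_zero Blin by blast
  ultimately show ?case using lin_zero by auto
next
  case (insert a I)
  have Bl: "B (\<lambda>y. \<alpha> *\<^sub>R u y + \<beta> *\<^sub>R v y) w = \<alpha> * B u w + \<beta> * B v w" for \<alpha> \<beta> u v w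
    using Blin by (simp add: lin_def)
  have Br: "B w (\<lambda>y. \<alpha> *\<^sub>R u y + \<beta> *\<^sub>R v y) = \<alpha> * B w u + \<beta> * B w v" for \<alpha> \<beta> u v w
  proof -
    have "B w (\<lambda>y. \<alpha> *\<^sub>R u y + \<beta> *\<^sub>R v y) = B (\<lambda>y. \<alpha> *\<^sub>R u y + \<beta> *\<^sub>R v y) w"
      using Bsym by blast
    then show ?thesis by (simp add: Bl Bsym[rule_format, of w u] Bsym[rule_format, of w v])
  qed
  show ?case
  proof (intro impI allI)
    fix f :: "('a \<Rightarrow> 'b) \<Rightarrow> real"
    assume def: "\<forall>v\<in>lspan g (insert a I). B v v = 0 \<longrightarrow> v = (\<lambda>y. 0)" and lf: "lin f"
    have def': "\<forall>v\<in>lspan g I. B v v = 0 \<longrightarrow> v = (\<lambda>y. 0)"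
    proof (intro ballI impI)
      fix v assume "v \<in> lspan g I" "B v v = 0"
      have "v \<in> lspan g (insert a I)" using \<open>v \<in> lspan g I\<close> by (rule lspan_mono_insert[OF _ insert(1)])
      then show "v = (\<lambda>y. 0)" using \<open>B v v = 0\<close> by (rule def[rule_format])
    qed
    have IH: "\<And>f. lin f \<Longrightarrow> \<exists>v\<in>lspan g I. \<forall>w\<in>lspan g I. B v w = f w"
      using insert.IH def' by simp
    have linBa: "lin (\<lambda>w. B (g a) w)" using Br by (simp add: lin_def)
    obtain v' where v': "v' \<in> lspan g I" "\<forall>w\<in>lspan g I. B v' w = f w" using IH[OF lf] by blast
    obtain u' where u': "u' \<in> lspan g I" "\<forall>w\<in>lspan g I. B u' w = B (g a) w" using IH[OF linBa] by blast
    define a' where "a' = (\<lambda>y. g a y - u' y)"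
    have a'_eq: "a' = (\<lambda>y. 1 *\<^sub>R g a y + (-1) *\<^sub>R u' y)" by (simp add: a'_def)
    have mu: "(\<lambda>y. (-1) *\<^sub>R u' y + 0 *\<^sub>R u' y) \<in> lspan g I" by (rule lspan_lc[OF u'(1) u'(1)])
    have a'_mem: "a' \<in> lspan g (insert a I)" unfolding lspan_insert[OF insert(2) insert(1)]
      apply (rule bexI[OF _ mu])
      apply (rule exI[of _ 1])
      apply (simp add: a'_def)
      done
    have orth: "\<forall>w\<in>lspan g I. B a' w = 0"
    proof
      fix w assume w: "w \<in> lspan g I"
      have "B a' w = 1 * B (g a) w + (-1) * B u' w" unfolding a'_eq by (rule Bl)
      then show "B a' w = 0" using u'(2) w by simp
    qed
    show "\<exists>v\<in>lspan g (insert a I). \<forall>w\<in>lspan g (insert a I). B v w = f w"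
    proof (cases "B a' a' = 0")
      case True
      then have "a' = (\<lambda>y. 0)" using def a'_mem by blast
      then have ga: "g a = u'" by (auto simp: a'_def fun_eq_iff)
      have sub: "lspan g (insert a I) \<subseteq> lspan g I"
      proof
        fix w assume "w \<in> lspan g (insert a I)"
        then obtain u t where u: "u \<in> lspan g I" and w: "w = (\<lambda>y. u y + t *\<^sub>R g a y)"
          using lspan_insert[OF insert(2) insert(1)] by blast
        have "w = (\<lambda>y. 1 *\<^sub>R u y + t *\<^sub>R u' y)" by (simp add: w ga)
        then show "w \<in> lspan g I" using lspan_lc[OF u u'(1), of 1 t] by simp
      qed
      have "v' \<in> lspan g (insert a I)" by (rule lspan_mono_insert[OF v'(1) insert(1)])
      moreover have "\<forall>w\<in>lspan g (insert a I). B v' w = f w" using v'(2) sub by blast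
      ultimately show ?thesis by blast
    next
      case False
      define k where "k = (f a' - B v' a') / B a' a'"
      define v where "v = (\<lambda>y. 1 *\<^sub>R v' y + k *\<^sub>R a' y)"
      have vmem: "v \<in> lspan g (insert a I)" unfolding v_def
        by (rule lspan_lc[OF lspan_mono_insert[OF v'(1) insert(1)] a'_mem])
      show ?thesis
      proof (intro bexI[OF _ vmem] ballI)
        fix w assume "w \<in> lspan g (insert a I)"
        then obtain u t where u: "u \<in> lspan g I" and w: "w = (\<lambda>y. u y + t *\<^sub>R g a y)"
          using lspan_insert[OF insert(2) insert(1)] by blast
        define w'' where "w'' = (\<lambda>y. 1 *\<^sub>R u y + t *\<^sub>R u' y)"
        have w''mem: "w'' \<in> lspan g I" unfolding w''_def by (rule lspan_lc[OF u u'(1)])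
        have weq: "w = (\<lambda>y. 1 *\<^sub>R w'' y + t *\<^sub>R a' y)"
          by (simp add: w w''_def a'_def fun_eq_iff algebra_simps)
        have e1: "B v w = B v' w + k * B a' w" using Bl[of 1 v' k a' w] unfolding v_def by simp
        have e2: "B v' w = B v' w'' + t * B v' a'" using Br[of v' 1 w'' t a'] unfolding weq by simp
        have e3: "B a' w = B a' w'' + t * B a' a'" using Br[of a' 1 w'' t a'] unfolding weq by simp
        have e4: "B a' w'' = 0" using orth w''mem by blast
        have e5: "f w = f w'' + t * f a'" using lf[unfolded lin_def, rule_format, of 1 w'' t a'] unfolding weq by simp
        have e6: "B v' w'' = f w''" using v'(2) w''mem by blast
        have "k * B a' a' = f a' - B v' a'" using False by (simp add: k_def)
        then have kk: "B v' a' + k * B a' a' = f a'" by simp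
        have "B v w = f w'' + t * (B v' a' + k * B a' a')" using e1 e2 e3 e4 e6 by (simp add: algebra_simps)
        then show "B v w = f w" using kk e5 by simp
      qed
    qed
  qed
qed




lemma finite_box: "finite {q::int^'d::finite. \<forall>j. a \<le> q$j \<and> q$j \<le> b}"
proof -
  have "{q::int^'d. \<forall>j. a \<le> q$j \<and> q$j \<le> b} \<subseteq> vec_lambda ` (Pi\<^sub>E UNIV (\<lambda>_. {a..b}))"
  proof
    fix q :: "int^'d" assume "q \<in> {q. \<forall>j. a \<le> q$j \<and> q$j \<le> b}"
    then have "(\<lambda>j. q$j) \<in> Pi\<^sub>E UNIV (\<lambda>_. {a..b})" by (simp add: PiE_UNIV_domain)
    moreover have "q = vec_lambda (\<lambda>j. q$j)" by simp
    ultimately show "q \<in> vec_lambda ` (Pi\<^sub>E UNIV (\<lambda>_. {a..b}))" by blast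
  qed
  moreover have "finite (vec_lambda ` (Pi\<^sub>E UNIV (\<lambda>_. {a..b::int})) :: (int^'d) set)"
    by (intro finite_imageI finite_PiE) auto
  ultimately show ?thesis by (rule finite_subset)
qed

lemma finite_tbox: "finite (tbox M)"
  by (rule finite_subset[OF _ finite_box[of 0 "int M"]]) (auto simp: tbox_def less_imp_le)

lemma finite_cubeQ: "finite (cubeQ l)"
  by (rule finite_subset[OF _ finite_box[of 1 "int l - 1"]]) (auto simp: cubeQ_def)

lemma grad_lin: "grad (\<lambda>y. \<alpha> *\<^sub>R u y + \<beta> *\<^sub>R v y) x = \<alpha> *\<^sub>R grad u x + \<beta> *\<^sub>R grad v x"
  by (simp add: vec_eq_iff grad_def algebra_simps)

lemma ipA_lin:
  assumes "linear A"
  shows "ipA A M (\<lambda>y. \<alpha> *\<^sub>R u y + \<beta> *\<^sub>R v y) w = \<alpha> * ipA A M u w + \<beta> * ipA A M v w"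
  unfolding ipA_def grad_lin
  by (simp add: linear_add[OF assms] linear_cmul[OF assms] inner_add_left sum.distrib sum_distrib_left)

lemma ipA_sym:
  assumes "\<forall>F G. A F \<bullet> G = F \<bullet> A G"
  shows "ipA A M u v = ipA A M v u"
  unfolding ipA_def using assms by (simp add: inner_commute)

lemma lc_closed:
  fixes h :: "'k \<Rightarrow> 'a \<Rightarrow> 'b::real_vector"
  assumes cl: "\<And>u v \<alpha> \<beta>. u \<in> V \<Longrightarrow> v \<in> V \<Longrightarrow> (\<lambda>y. \<alpha> *\<^sub>R u y + \<beta> *\<^sub>R v y) \<in> V"
    and z: "(\<lambda>y. 0) \<in> V" and fin: "finite K" and h: "\<forall>k\<in>K. h k \<in> V"
  shows "(\<lambda>y. \<Sum>k\<in>K. c k *\<^sub>R h k y) \<in> V"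
  using fin h
proof (induction K)
  case empty then show ?case using z by simp
next
  case (insert a K)
  have m1: "h a \<in> V" using insert by simp
  have m2: "(\<lambda>y. \<Sum>k\<in>K. c k *\<^sub>R h k y) \<in> V" using insert by simp
  have eq: "(\<lambda>y. \<Sum>k\<in>insert a K. c k *\<^sub>R h k y) = (\<lambda>y. c a *\<^sub>R h a y + 1 *\<^sub>R (\<lambda>y. \<Sum>k\<in>K. c k *\<^sub>R h k y) y)"
    using insert(1,2) by simp
  show ?case unfolding eq by (rule cl[OF m1 m2])
qed

lemma XN_lc:
  assumes "u \<in> XN M" "v \<in> XN M"
  shows "(\<lambda>y. \<alpha> *\<^sub>R u y + \<beta> *\<^sub>R v y) \<in> XN M"
  using assms by (simp add: XN_def periodic_tor_def sum.distrib scaleR_sum_right[symmetric])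

lemma Vsub_lc:
  assumes "u \<in> Vsub M l x" "v \<in> Vsub M l x"
  shows "(\<lambda>y. \<alpha> *\<^sub>R u y + \<beta> *\<^sub>R v y) \<in> Vsub M l x"
  using assms XN_lc[of u M v \<alpha> \<beta>] unfolding Vsub_def by auto

lemma XN_zero: "(\<lambda>y. 0) \<in> XN M" by (simp add: XN_def periodic_tor_def)
lemma Vsub_zero: "(\<lambda>y. 0) \<in> Vsub M l x" by (simp add: Vsub_def XN_zero)




definition ind :: "nat \<Rightarrow> int^'d::finite \<Rightarrow> int^'d \<Rightarrow> real" where
  "ind M w p = (if cong_tor M w p then 1 else 0)"

definition q0 :: "int^'d::finite" where "q0 = (\<chi> j. 1)"

definition gQ :: "nat \<Rightarrow> int^'d::finite \<Rightarrow> ((int^'d) \<times> 'm::finite) \<Rightarrow> int^'d \<Rightarrow> real^'m" where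
  "gQ M x k = (\<lambda>w. (ind M w (fst k + x) - ind M w (q0 + x)) *\<^sub>R axis (snd k) 1)"

lemma cong_period: "cong_tor M (w + of_nat M * ej j) w"
  by (simp add: cong_tor_iff_dvd of_nat_index ej_def)

lemma ind_period: "ind M (w + of_nat M * ej j) p = ind M w p"
  unfolding ind_def using cong_period[of M w j] cong_trans cong_sym by metis

lemma sum_ind:
  fixes p :: "int^'d::finite"
  assumes "M > 0"
  shows "(\<Sum>w\<in>tbox M. ind M w p *\<^sub>R v) = (v::'a::real_vector)"
proof -
  have "(\<Sum>w\<in>tbox M. ind M w p *\<^sub>R v) = (\<Sum>w\<in>tbox M. if w = vmod M p then v else 0)"
  proof (rule sum.cong)
    fix w :: "int^'d" assume "w \<in> tbox M"
    then have "cong_tor M w p \<longleftrightarrow> w = vmod M p" using cong_vmod_eq tbox_vmod by metis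
    then show "ind M w p *\<^sub>R v = (if w = vmod M p then v else 0)" by (simp add: ind_def)
  qed simp
  also have "\<dots> = v" using vmod_tbox[OF assms, of p] by (subst sum.delta) (rule finite_tbox, simp)
  finally show ?thesis .
qed

lemma dvd_small:
  fixes d :: int assumes "int M dvd d" "\<bar>d\<bar> < int M" shows "d = 0"
proof (rule ccontr)
  assume "d \<noteq> 0"
  then have "\<bar>int M\<bar> \<le> \<bar>d\<bar>" using dvd_imp_le_int assms(1) by blast
  then show False using assms(2) by simp
qed

lemma q0_cubeQ: "l \<ge> 2 \<Longrightarrow> q0 \<in> cubeQ l"
  by (simp add: q0_def cubeQ_def)

locale S =
  fixes A :: "real^'d::finite^'m::finite \<Rightarrow> real^'d^'m" and M l :: nat and c0 :: real
  assumes Mpos: "M > 0" and l2: "l \<ge> 2" and lM: "int l - 1 < int M"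
    and linA: "linear A" and symA: "\<forall>F G. A F \<bullet> G = F \<bullet> A G"
    and c0: "c0 > 0" and coer: "\<forall>F. A F \<bullet> F \<ge> c0 * (norm F)\<^sup>2"
begin

lemma Q_unique:
  assumes "q \<in> cubeQ l" "q' \<in> cubeQ l" "cong_tor M (q + x) (q' + x)"
  shows "q = q'"
proof -
  have "q$j = q'$j" for j
  proof -
    have d1: "int M dvd (q$j - q'$j)" using assms(3) by (simp add: cong_tor_iff_dvd)
    have "1 \<le> q$j" "q$j \<le> int l - 1" "1 \<le> q'$j" "q'$j \<le> int l - 1" using assms(1,2) by (auto simp: cubeQ_def)
    then have d2: "\<bar>q$j - q'$j\<bar> < int M" using lM by (simp add: abs_less_iff)
    show ?thesis using dvd_small[OF d1 d2] by simp
  qed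
  then show ?thesis by (simp add: vec_eq_iff)
qed

lemma gQ_Vsub:
  fixes x :: "int^'d" and k :: "(int^'d) \<times> 'm"
  assumes "fst k \<in> cubeQ l"
  shows "gQ M x k \<in> Vsub M l x"
proof -
  have per: "periodic_tor M (gQ M x k)"
    unfolding periodic_tor_def gQ_def by (simp add: ind_period)
  have "(\<Sum>w\<in>tbox M. gQ M x k w) = (\<Sum>w\<in>tbox M. ind M w (fst k + x) *\<^sub>R axis (snd k) (1::real))
      - (\<Sum>w\<in>tbox M. ind M w (q0 + x) *\<^sub>R axis (snd k) (1::real))"
    unfolding gQ_def by (simp add: scaleR_diff_left sum_subtractf)
  also have "\<dots> = 0" using sum_ind[OF Mpos, of "fst k + x" "axis (snd k) (1::real)"] sum_ind[OF Mpos, of "q0 + x" "axis (snd k) (1::real)"] by simp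
  finally have "(\<Sum>w\<in>tbox M. gQ M x k w) = 0" .
  moreover have "gQ M x k y = 0" if "\<not> (\<exists>q\<in>cubeQ l. cong_tor M y (q + x))" for y
    using that assms q0_cubeQ[OF l2] by (auto simp: gQ_def ind_def)
  ultimately show ?thesis using per by (simp add: Vsub_def XN_def)
qed

lemma Vsub_sum0:
  fixes \<eta> :: "int^'d \<Rightarrow> real^'m" and x :: "int^'d"
  assumes "\<eta> \<in> Vsub M l x"
  shows "(\<Sum>q\<in>cubeQ l. \<eta> (q + x)) = 0"
proof -
  have per: "periodic_tor M \<eta>" and s0: "(\<Sum>w\<in>tbox M. \<eta> w) = 0"
    and van: "\<And>y. \<not> (\<exists>q\<in>cubeQ l. cong_tor M y (q + x)) \<Longrightarrow> \<eta> y = 0"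
    using assms by (auto simp: Vsub_def XN_def)
  define h where "h = (\<lambda>q. vmod M (q + x))"
  have inj: "inj_on h (cubeQ l)"
    by (rule inj_onI) (auto simp: h_def cong_vmod_eq[symmetric] intro: Q_unique)
  have sub: "h ` cubeQ l \<subseteq> tbox M" using vmod_tbox[OF Mpos] by (auto simp: h_def)
  have "(\<Sum>w\<in>tbox M. \<eta> w) = (\<Sum>w\<in>h ` cubeQ l. \<eta> w)"
  proof (rule sum.mono_neutral_right[OF finite_tbox sub])
    show "\<forall>w\<in>tbox M - h ` cubeQ l. \<eta> w = 0"
    proof
      fix w assume w: "w \<in> tbox M - h ` cubeQ l"
      show "\<eta> w = 0"
      proof (rule van, rule notI)
        assume "\<exists>q\<in>cubeQ l. cong_tor M w (q + x)"
        then obtain q where "q \<in> cubeQ l" "cong_tor M w (q + x)" by blast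
        then have "w = h q" using w tbox_vmod[of w M] by (simp add: h_def cong_vmod_eq)
        then show False using w \<open>q \<in> cubeQ l\<close> by blast
      qed
    qed
  qed
  also have "\<dots> = (\<Sum>q\<in>cubeQ l. \<eta> (h q))" using sum.reindex[OF inj, of \<eta>] by (simp add: o_def)
  also have "\<dots> = (\<Sum>q\<in>cubeQ l. \<eta> (q + x))"
    using periodic_vmod[OF per] by (simp add: h_def)
  finally show ?thesis using s0 by simp
qed

lemma Vsub_pt:
  fixes w :: "int^'d" and \<eta> :: "int^'d \<Rightarrow> real^'m" and x :: "int^'d"
  assumes "\<eta> \<in> Vsub M l x"
  shows "(\<Sum>q\<in>cubeQ l. ind M w (q + x) *\<^sub>R \<eta> (q + x)) = \<eta> w"
proof -
  have per: "periodic_tor M \<eta>"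
    and van: "\<And>y. \<not> (\<exists>q\<in>cubeQ l. cong_tor M y (q + x)) \<Longrightarrow> \<eta> y = 0"
    using assms by (auto simp: Vsub_def XN_def)
  show ?thesis
  proof (cases "\<exists>q\<in>cubeQ l. cong_tor M w (q + x)")
    case True
    then obtain q' where q': "q' \<in> cubeQ l" "cong_tor M w (q' + x)" by blast
    have "(\<Sum>q\<in>cubeQ l. ind M w (q + x) *\<^sub>R \<eta> (q + x)) = (\<Sum>q\<in>cubeQ l. if q = q' then \<eta> (q' + x) else 0)"
    proof (rule sum.cong)
      fix q :: "int^'d" assume q: "q \<in> cubeQ l"
      have "cong_tor M w (q + x) \<longleftrightarrow> q = q'"
        using Q_unique[OF q q'(1)] q'(2) cong_trans cong_sym by metis
      then show "ind M w (q + x) *\<^sub>R \<eta> (q + x) = (if q = q' then \<eta> (q' + x) else 0)"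
        by (auto simp: ind_def)
    qed simp
    also have "\<dots> = \<eta> (q' + x)" using q'(1) by (subst sum.delta) (rule finite_cubeQ, simp)
    also have "\<dots> = \<eta> w" using periodic_cong[OF per q'(2)] by simp
    finally show ?thesis .
  next
    case False
    then show ?thesis using van[OF False] by (auto simp: ind_def intro!: sum.neutral)
  qed
qed

lemma Vsub_expand:
  fixes \<eta> :: "int^'d \<Rightarrow> real^'m" and x :: "int^'d"
  assumes "\<eta> \<in> Vsub M l x"
  shows "\<eta> = (\<lambda>w. \<Sum>k\<in>cubeQ l \<times> UNIV. (\<eta> (fst k + x) $ snd k) *\<^sub>R gQ M x k w)"
proof
  fix w
  have "(\<Sum>k\<in>cubeQ l \<times> UNIV. (\<eta> (fst k + x) $ snd k) *\<^sub>R gQ M x k w)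
     = (\<Sum>q\<in>cubeQ l. \<Sum>i\<in>UNIV. (\<eta> (q + x) $ i) *\<^sub>R gQ M x (q, i) w)"
    by (simp add: sum.cartesian_product split_def)
  also have "\<dots> = (\<Sum>q\<in>cubeQ l. (ind M w (q + x) - ind M w (q0 + x)) *\<^sub>R \<eta> (q + x))"
  proof (rule sum.cong[OF refl])
    fix q
    have "(\<Sum>i\<in>UNIV. (\<eta> (q + x) $ i) *\<^sub>R gQ M x (q, i) w)
        = (ind M w (q + x) - ind M w (q0 + x)) *\<^sub>R (\<Sum>i\<in>UNIV. (\<eta> (q + x) $ i) *\<^sub>R axis i (1::real))"
      by (simp add: gQ_def scaleR_sum_right mult.commute)
    also have "(\<Sum>i\<in>UNIV. (\<eta> (q + x) $ i) *\<^sub>R axis i (1::real)) = \<eta> (q + x)"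
      using basis_expansion[of "\<eta> (q + x)"] by (simp add: scalar_mult_eq_scaleR)
    finally show "(\<Sum>i\<in>UNIV. (\<eta> (q + x) $ i) *\<^sub>R gQ M x (q, i) w)
        = (ind M w (q + x) - ind M w (q0 + x)) *\<^sub>R \<eta> (q + x)" .
  qed
  also have "\<dots> = (\<Sum>q\<in>cubeQ l. ind M w (q + x) *\<^sub>R \<eta> (q + x)) - ind M w (q0 + x) *\<^sub>R (\<Sum>q\<in>cubeQ l. \<eta> (q + x))"
    by (simp add: scaleR_diff_left sum_subtractf scaleR_sum_right)
  also have "\<dots> = \<eta> w" using Vsub_pt[OF assms] Vsub_sum0[OF assms] by simp
  finally show "\<eta> w = (\<Sum>k\<in>cubeQ l \<times> UNIV. (\<eta> (fst k + x) $ snd k) *\<^sub>R gQ M x k w)" by simp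
qed

lemma lspan_Vsub: "lspan (gQ M x) (cubeQ l \<times> (UNIV::'m set)) = (Vsub M l x :: (int^'d \<Rightarrow> real^'m) set)"
proof
  show "lspan (gQ M x) (cubeQ l \<times> (UNIV::'m set)) \<subseteq> (Vsub M l x :: (int^'d \<Rightarrow> real^'m) set)"
  proof
    fix v :: "int^'d \<Rightarrow> real^'m" assume "v \<in> lspan (gQ M x) (cubeQ l \<times> UNIV)"
    then obtain c where v: "v = (\<lambda>y. \<Sum>k\<in>cubeQ l \<times> UNIV. c k *\<^sub>R gQ M x k y)" by (auto simp: lspan_def)
    show "v \<in> Vsub M l x" unfolding v
    proof (rule lc_closed[OF Vsub_lc Vsub_zero])
      show "finite (cubeQ l \<times> (UNIV::'m set))" by (simp add: finite_cubeQ)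
      show "\<forall>k\<in>cubeQ l \<times> (UNIV::'m set). gQ M x k \<in> Vsub M l x"
      proof
        fix k :: "(int^'d) \<times> 'm" assume "k \<in> cubeQ l \<times> (UNIV::'m set)"
        then show "gQ M x k \<in> Vsub M l x" by (intro gQ_Vsub) auto
      qed
    qed
  qed
next
  show "(Vsub M l x :: (int^'d \<Rightarrow> real^'m) set) \<subseteq> lspan (gQ M x) (cubeQ l \<times> (UNIV::'m set))"
  proof
    fix v :: "int^'d \<Rightarrow> real^'m" assume v: "v \<in> Vsub M l x"
    show "v \<in> lspan (gQ M x) (cubeQ l \<times> (UNIV::'m set))"
      unfolding lspan_def
      apply (rule CollectI)
      apply (rule exI[of _ "\<lambda>k. v (fst k + x) $ snd k"])
      apply (rule conjI[OF _ TrueI])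
      apply (rule Vsub_expand[OF v])
      done
  qed
qed

end



context S begin

lemma grad_vmod:
  assumes per: "periodic_tor M v" shows "grad v y = grad v (vmod M y)"
proof -
  have "v (y + ej j) = v (vmod M y + ej j)" for j
    by (rule periodic_cong[OF per], rule cong_add, rule cong_sym, rule vmod_cong)
  moreover have "v y = v (vmod M y)" by (rule periodic_vmod[OF per])
  ultimately show ?thesis by (simp add: grad_def)
qed

lemma ipA_zero_grad:
  assumes per: "periodic_tor M v" and z: "ipA A M v v = 0"
  shows "grad v y = 0"
proof -
  have nn: "0 \<le> A (grad v y) \<bullet> grad v y" for y
  proof -
    have "0 \<le> c0 * (norm (grad v y))\<^sup>2" using c0 by simp
    also have "\<dots> \<le> A (grad v y) \<bullet> grad v y" using coer by blast
    finally show "0 \<le> A (grad v y) \<bullet> grad v y" .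
  qed
  have all0: "\<forall>y\<in>tbox M. A (grad v y) \<bullet> grad v y = 0"
    using z sum_nonneg_eq_0_iff[of "tbox M" "\<lambda>y. A (grad v y) \<bullet> grad v y"] finite_tbox[of M] nn
    unfolding ipA_def by simp
  have g0: "grad v y' = 0" if "y' \<in> tbox M" for y'
  proof -
    have "c0 * (norm (grad v y'))\<^sup>2 \<le> 0" using coer all0 that by metis
    then have "(norm (grad v y'))\<^sup>2 \<le> 0" using c0 by (simp add: mult_le_0_iff)
    then show ?thesis by simp
  qed
  show ?thesis using grad_vmod[OF per, of y] g0[OF vmod_tbox[OF Mpos]] by simp
qed

lemma sh_ej: "ej j = sh j 1" by (simp add: ej_def sh_def)

lemma Vsub_definite:
  fixes v :: "int^'d \<Rightarrow> real^'m" and x :: "int^'d"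
  assumes v: "v \<in> Vsub M l x" and z: "ipA A M v v = 0"
  shows "v = (\<lambda>y. 0)"
proof -
  have per: "periodic_tor M v"
    and van: "\<And>y. \<not> (\<exists>q\<in>cubeQ l. cong_tor M y (q + x)) \<Longrightarrow> v y = 0"
    using v by (auto simp: Vsub_def XN_def)
  have step: "v (y + ej j) = v y" for y j
  proof -
    have "grad v y = 0" by (rule ipA_zero_grad[OF per z])
    then have "\<forall>i. (v (y + ej j) - v y) $ i = 0" by (simp add: grad_def vec_eq_iff)
    then show ?thesis by (simp add: vec_eq_iff)
  qed
  have walk: "v (y + sh j (int k)) = v y" for y j k
  proof (induction k)
    case 0 then show ?case by simp
  next
    case (Suc k)
    have "y + sh j (int (Suc k)) = (y + sh j (int k)) + ej j"
      by (simp add: sh_ej sh_add[symmetric] add.assoc add.commute)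
    then show ?case using step[of "y + sh j (int k)" j] Suc by (simp add: add.assoc)
  qed
  show ?thesis
  proof (rule ext, rule ccontr)
    fix y assume ne: "v y \<noteq> 0"
    define j0 :: 'd where "j0 = undefined"
    obtain q where q: "q \<in> cubeQ l" "cong_tor M y (q + x)" using van ne by blast
    have qb: "1 \<le> q$j0" "q$j0 \<le> int l - 1" using q(1) by (auto simp: cubeQ_def)
    define k where "k = nat (int l - q$j0)"
    have kk: "int k = int l - q$j0" using qb by (simp add: k_def)
    have "v (y + sh j0 (int k)) \<noteq> 0" using walk ne by simp
    then obtain q' where q': "q' \<in> cubeQ l" "cong_tor M (y + sh j0 (int k)) (q' + x)" using van by blast
    have qb': "1 \<le> q'$j0" "q'$j0 \<le> int l - 1" using q'(1) by (auto simp: cubeQ_def)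
    have d1: "int M dvd (y$j0 - (q$j0 + x$j0))" using q(2) by (simp add: cong_tor_iff_dvd)
    have d2: "int M dvd (y$j0 + int k - (q'$j0 + x$j0))" using q'(2) unfolding cong_tor_iff_dvd by (drule_tac x=j0 in spec) (simp add: sh_def)
    have "int M dvd ((y$j0 + int k - (q'$j0 + x$j0)) - (y$j0 - (q$j0 + x$j0)))" by (rule dvd_diff[OF d2 d1])
    moreover have "(y$j0 + int k - (q'$j0 + x$j0)) - (y$j0 - (q$j0 + x$j0)) = int l - q'$j0" using kk by simp
    ultimately have d3: "int M dvd (int l - q'$j0)" by simp
    have "\<bar>int l - q'$j0\<bar> < int M" using qb' lM by simp
    then have "int l - q'$j0 = 0" by (rule dvd_small[OF d3])
    then show False using qb' by simp
  qed
qed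

lemma ipA_lin': "ipA A M (\<lambda>y. \<alpha> *\<^sub>R u y + \<beta> *\<^sub>R v y) w = \<alpha> * ipA A M u w + \<beta> * ipA A M v w"
  by (rule ipA_lin[OF linA])

lemma ipA_sym': "ipA A M u v = ipA A M v u"
  by (rule ipA_sym[OF symA])

lemma ipA_diff: "ipA A M (\<lambda>y. u y - v y) w = ipA A M u w - ipA A M v w"
proof -
  have "ipA A M (\<lambda>y. 1 *\<^sub>R u y + (-1) *\<^sub>R v y) w = 1 * ipA A M u w + (-1) * ipA A M v w" by (rule ipA_lin')
  moreover have "(\<lambda>y. 1 *\<^sub>R u y + (-1) *\<^sub>R v y) = (\<lambda>y. u y - v y)" by simp
  ultimately show ?thesis by simp
qed

lemma Proj_ex:
  fixes \<phi> :: "int^'d \<Rightarrow> real^'m" and x :: "int^'d"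
  shows "\<exists>P. P \<in> Vsub M l x \<and> (\<forall>\<eta>\<in>Vsub M l x. ipA A M (\<lambda>y. \<phi> y - P y) \<eta> = 0)"
proof -
  have l1: "\<forall>w. lin (\<lambda>u. ipA A M u w)" by (simp add: lin_def ipA_lin')
  have l2: "lin (ipA A M \<phi>)" by (simp add: lin_def ipA_lin' ipA_sym'[of \<phi>])
  have sym: "\<forall>u v. ipA A M u v = ipA A M v u" using ipA_sym' by blast
  have fin: "finite (cubeQ l \<times> (UNIV::'m set))" by (simp add: finite_cubeQ)
  have def: "\<forall>v\<in>lspan (gQ M x) (cubeQ l \<times> (UNIV::'m set)). ipA A M v v = 0 \<longrightarrow> v = (\<lambda>y. 0)"
    unfolding lspan_Vsub using Vsub_definite by blast
  obtain v where v: "v \<in> Vsub M l x" "\<forall>w\<in>Vsub M l x. ipA A M v w = ipA A M \<phi> w"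
    using riesz[OF fin l1 sym, of "gQ M x"] def l2 unfolding lspan_Vsub by blast
  show ?thesis
    by (rule exI[of _ v]) (simp add: v ipA_diff)
qed

lemma Proj_uniq:
  fixes \<phi> P1 P2 :: "int^'d \<Rightarrow> real^'m" and x :: "int^'d"
  assumes "P1 \<in> Vsub M l x" "\<forall>\<eta>\<in>Vsub M l x. ipA A M (\<lambda>y. \<phi> y - P1 y) \<eta> = 0"
    and "P2 \<in> Vsub M l x" "\<forall>\<eta>\<in>Vsub M l x. ipA A M (\<lambda>y. \<phi> y - P2 y) \<eta> = 0"
  shows "P1 = P2"
proof -
  define d where "d = (\<lambda>y. P2 y - P1 y)"
  have dm: "d \<in> Vsub M l x" using Vsub_lc[OF assms(3) assms(1), of 1 "-1"] by (simp add: d_def)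
  have e1: "ipA A M (\<lambda>y. (\<phi> y - P1 y) - (\<phi> y - P2 y)) d = ipA A M (\<lambda>y. \<phi> y - P1 y) d - ipA A M (\<lambda>y. \<phi> y - P2 y) d"
    by (rule ipA_diff)
  have e2: "(\<lambda>y. (\<phi> y - P1 y) - (\<phi> y - P2 y)) = d" by (simp add: d_def)
  have "ipA A M d d = ipA A M (\<lambda>y. \<phi> y - P1 y) d - ipA A M (\<lambda>y. \<phi> y - P2 y) d"
    using e1 unfolding e2 .
  also have "\<dots> = 0" using assms(2,4) dm by simp
  finally have "d = (\<lambda>y. 0)" by (rule Vsub_definite[OF dm])
  then show ?thesis by (simp add: d_def fun_eq_iff)
qed

lemma Proj_prop:
  fixes \<phi> :: "int^'d \<Rightarrow> real^'m" and x :: "int^'d"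
  shows "Proj A M l x \<phi> \<in> Vsub M l x \<and> (\<forall>\<eta>\<in>Vsub M l x. ipA A M (\<lambda>y. \<phi> y - Proj A M l x \<phi> y) \<eta> = 0)"
proof -
  have "\<exists>!P. P \<in> Vsub M l x \<and> (\<forall>\<eta>\<in>Vsub M l x. ipA A M (\<lambda>y. \<phi> y - P y) \<eta> = 0)"
    using Proj_ex Proj_uniq by blast
  then show ?thesis unfolding Proj_def by (rule theI')
qed

lemma Proj_eqI:
  fixes \<phi> P :: "int^'d \<Rightarrow> real^'m" and x :: "int^'d"
  assumes "P \<in> Vsub M l x" "\<forall>\<eta>\<in>Vsub M l x. ipA A M (\<lambda>y. \<phi> y - P y) \<eta> = 0"
  shows "Proj A M l x \<phi> = P"
  using Proj_prop[of x \<phi>] Proj_uniq[OF _ _ assms] by blast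

lemma Proj_lin:
  fixes u v :: "int^'d \<Rightarrow> real^'m" and x :: "int^'d"
  shows "Proj A M l x (\<lambda>y. \<alpha> *\<^sub>R u y + \<beta> *\<^sub>R v y) = (\<lambda>y. \<alpha> *\<^sub>R Proj A M l x u y + \<beta> *\<^sub>R Proj A M l x v y)"
proof (rule Proj_eqI)
  have pu: "Proj A M l x u \<in> Vsub M l x" "\<forall>\<eta>\<in>Vsub M l x. ipA A M (\<lambda>y. u y - Proj A M l x u y) \<eta> = 0"
    using Proj_prop by blast+
  have pv: "Proj A M l x v \<in> Vsub M l x" "\<forall>\<eta>\<in>Vsub M l x. ipA A M (\<lambda>y. v y - Proj A M l x v y) \<eta> = 0"
    using Proj_prop by blast+
  show "(\<lambda>y. \<alpha> *\<^sub>R Proj A M l x u y + \<beta> *\<^sub>R Proj A M l x v y) \<in> Vsub M l x"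
    by (rule Vsub_lc[OF pu(1) pv(1)])
  show "\<forall>\<eta>\<in>Vsub M l x. ipA A M (\<lambda>y. (\<alpha> *\<^sub>R u y + \<beta> *\<^sub>R v y) - (\<alpha> *\<^sub>R Proj A M l x u y + \<beta> *\<^sub>R Proj A M l x v y)) \<eta> = 0"
  proof
    fix \<eta> :: "int^'d \<Rightarrow> real^'m" assume e: "\<eta> \<in> Vsub M l x"
    have "(\<lambda>y. (\<alpha> *\<^sub>R u y + \<beta> *\<^sub>R v y) - (\<alpha> *\<^sub>R Proj A M l x u y + \<beta> *\<^sub>R Proj A M l x v y))
      = (\<lambda>y. \<alpha> *\<^sub>R (\<lambda>y. u y - Proj A M l x u y) y + \<beta> *\<^sub>R (\<lambda>y. v y - Proj A M l x v y) y)"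
      by (simp add: fun_eq_iff algebra_simps)
    then show "ipA A M (\<lambda>y. (\<alpha> *\<^sub>R u y + \<beta> *\<^sub>R v y) - (\<alpha> *\<^sub>R Proj A M l x u y + \<beta> *\<^sub>R Proj A M l x v y)) \<eta> = 0"
      using ipA_lin'[of \<alpha> "\<lambda>y. u y - Proj A M l x u y" \<beta> "\<lambda>y. v y - Proj A M l x v y" \<eta>] pu(2) pv(2) e by simp
  qed
qed

end



definition SEP :: "nat \<Rightarrow> nat \<Rightarrow> (int^'d::finite \<Rightarrow> real^'m::finite) \<Rightarrow> (int^'d \<Rightarrow> real^'m) \<Rightarrow> bool" where
  "SEP M l \<phi> \<psi> \<longleftrightarrow> (\<forall>a b v. \<phi> a \<noteq> 0 \<longrightarrow> \<psi> b \<noteq> 0 \<longrightarrow> cong_tor M (a - b) v \<longrightarrow> (\<exists>j. int l \<le> \<bar>v$j\<bar>))"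

context S begin

lemma Top_lin:
  fixes u v :: "int^'d \<Rightarrow> real^'m"
  shows "Top A M l (\<lambda>y. \<alpha> *\<^sub>R u y + \<beta> *\<^sub>R v y) = (\<lambda>y. \<alpha> *\<^sub>R Top A M l u y + \<beta> *\<^sub>R Top A M l v y)"
  unfolding Top_def Proj_lin
  by (simp add: fun_eq_iff sum.distrib scaleR_add_right scaleR_sum_right)

lemma Rop_lin:
  fixes u v :: "int^'d \<Rightarrow> real^'m"
  shows "Rop A M l (\<lambda>y. \<alpha> *\<^sub>R u y + \<beta> *\<^sub>R v y) = (\<lambda>y. \<alpha> *\<^sub>R Rop A M l u y + \<beta> *\<^sub>R Rop A M l v y)"
  unfolding Rop_def Top_lin by (simp add: fun_eq_iff algebra_simps)

lemma ej_comp: "(c + ej k) $ i = c $ i + (if i = k then 1 else 0)"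
  by (simp add: ej_def)

lemma cube_grad0:
  fixes \<phi> :: "int^'d \<Rightarrow> real^'m" and x c y :: "int^'d"
  assumes van: "\<forall>c a. (\<forall>i. 0 \<le> c$i \<and> c$i \<le> int l) \<longrightarrow> cong_tor M a (c + x) \<longrightarrow> \<phi> a = 0"
    and cy: "cong_tor M y (c + x)" and cb: "\<forall>i. 0 \<le> c$i \<and> c$i \<le> int l - 1"
  shows "grad \<phi> y = 0"
proof -
  have "\<forall>i. 0 \<le> c$i \<and> c$i \<le> int l"
  proof
    fix i show "0 \<le> c$i \<and> c$i \<le> int l" using cb[rule_format, of i] by simp
  qed
  then have p0: "\<phi> y = 0" using van cy by blast
  have pk: "\<phi> (y + ej k) = 0" for k
  proof -
    have "cong_tor M (y + ej k) (c + x + ej k)" by (rule cong_add[OF cy])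
    moreover have "c + x + ej k = (c + ej k) + x" by (simp add: algebra_simps)
    ultimately have cg: "cong_tor M (y + ej k) ((c + ej k) + x)" by simp
    have "\<forall>i. 0 \<le> (c + ej k)$i \<and> (c + ej k)$i \<le> int l"
    proof
      fix i show "0 \<le> (c + ej k)$i \<and> (c + ej k)$i \<le> int l" using cb[rule_format, of i] by (cases "i = k") (simp_all add: ej_def)
    qed
    then show ?thesis using van cg by blast
  qed
  show ?thesis by (simp add: grad_def vec_eq_iff p0 pk)
qed

lemma Proj_ip_zero:
  fixes \<phi> \<psi> :: "int^'d \<Rightarrow> real^'m" and x :: "int^'d"
  assumes sep: "SEP M l \<phi> \<psi>"
  shows "ip M (Proj A M l x \<phi>) \<psi> = 0"
proof (cases "\<exists>b q. q \<in> cubeQ l \<and> cong_tor M b (q + x) \<and> \<psi> b \<noteq> 0")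
  case False
  have Pv: "Proj A M l x \<phi> \<in> Vsub M l x" using Proj_prop by blast
  show ?thesis unfolding ip_def
  proof (rule sum.neutral, rule ballI)
    fix y :: "int^'d" assume "y \<in> tbox M"
    show "Proj A M l x \<phi> y \<bullet> \<psi> y = 0"
    proof (cases "\<exists>q\<in>cubeQ l. cong_tor M y (q + x)")
      case True then have "\<psi> y = 0" using False by blast
      then show ?thesis by simp
    next
      case F2: False then have "Proj A M l x \<phi> y = 0" using Pv by (simp add: Vsub_def)
      then show ?thesis by simp
    qed
  qed
next
  case True
  then obtain b q where bq: "q \<in> cubeQ l" "cong_tor M b (q + x)" "\<psi> b \<noteq> 0" by blast
  have qb: "\<forall>j. 1 \<le> q$j \<and> q$j \<le> int l - 1" using bq(1) by (auto simp: cubeQ_def)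
  have van: "\<forall>c a. (\<forall>i. 0 \<le> c$i \<and> c$i \<le> int l) \<longrightarrow> cong_tor M a (c + x) \<longrightarrow> \<phi> a = 0"
  proof (intro allI impI, rule ccontr)
    fix c a :: "int^'d" assume cb: "\<forall>i. 0 \<le> c$i \<and> c$i \<le> int l" and ca: "cong_tor M a (c + x)" and ne: "\<phi> a \<noteq> 0"
    have "cong_tor M (a - b) ((c + x) - (q + x))" by (rule cong_diff[OF ca bq(2)])
    then have "cong_tor M (a - b) (c - q)" by simp
    then obtain j where j: "int l \<le> \<bar>(c - q)$j\<bar>" using sep ne bq(3) unfolding SEP_def by blast
    have "\<bar>(c - q)$j\<bar> \<le> int l - 1" using cb[rule_format, of j] qb[rule_format, of j] by (simp add: abs_less_iff)
    then show False using j by simp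
  qed
  have ipA0: "ipA A M \<phi> \<eta> = 0" if e: "\<eta> \<in> Vsub M l x" for \<eta> :: "int^'d \<Rightarrow> real^'m"
  proof -
    have evan: "\<And>y. \<not> (\<exists>q\<in>cubeQ l. cong_tor M y (q + x)) \<Longrightarrow> \<eta> y = 0"
      using e by (auto simp: Vsub_def)
    have "grad \<phi> y = 0 \<or> grad \<eta> y = 0" for y
    proof (cases "\<eta> y \<noteq> 0")
      case True
      then obtain q' where q': "q' \<in> cubeQ l" "cong_tor M y (q' + x)" using evan by blast
      have "\<forall>i. 0 \<le> q'$i \<and> q'$i \<le> int l - 1"
      proof
        fix i have "1 \<le> q'$i \<and> q'$i \<le> int l - 1" using q'(1) by (simp add: cubeQ_def)
        then show "0 \<le> q'$i \<and> q'$i \<le> int l - 1" by simp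
      qed
      then show ?thesis using cube_grad0[OF van q'(2)] by blast
    next
      case F1: False
      show ?thesis
      proof (cases "\<exists>j. \<eta> (y + ej j) \<noteq> 0")
        case True
        then obtain j where j: "\<eta> (y + ej j) \<noteq> 0" by blast
        then obtain q' where q': "q' \<in> cubeQ l" "cong_tor M (y + ej j) (q' + x)" using evan by blast
        have c1: "cong_tor M (y + ej j + (- ej j)) (q' + x + (- ej j))" by (rule cong_add[OF q'(2)])
        have e1: "y + ej j + (- ej j) = y" by simp
        have e2: "q' + x + (- ej j) = (q' - ej j) + x" by (simp add: algebra_simps)
        have cg: "cong_tor M y ((q' - ej j) + x)" using c1 unfolding e1 e2 .
        have "\<forall>i. 0 \<le> (q' - ej j)$i \<and> (q' - ej j)$i \<le> int l - 1"
        proof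
          fix i have "1 \<le> q'$i \<and> q'$i \<le> int l - 1" using q'(1) by (simp add: cubeQ_def)
          then show "0 \<le> (q' - ej j)$i \<and> (q' - ej j)$i \<le> int l - 1" by (cases "i = j") (simp_all add: ej_def)
        qed
        then show ?thesis using cube_grad0[OF van cg] by blast
      next
        case False
        then have "grad \<eta> y = 0" using F1 by (simp add: grad_def vec_eq_iff)
        then show ?thesis by blast
      qed
    qed
    then show ?thesis unfolding ipA_def
      by (intro sum.neutral ballI) (metis inner_zero_left inner_zero_right linear_0[OF linA])
  qed
  have "Proj A M l x \<phi> = (\<lambda>y. 0)"
  proof (rule Proj_eqI)
    show "(\<lambda>y. 0) \<in> Vsub M l x" by (rule Vsub_zero)
    show "\<forall>\<eta>\<in>Vsub M l x. ipA A M (\<lambda>y. \<phi> y - 0) \<eta> = 0" using ipA0 by simp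
  qed
  then show ?thesis by (simp add: ip_def)
qed

lemma Top_ip_zero:
  fixes \<phi> \<psi> :: "int^'d \<Rightarrow> real^'m"
  assumes sep: "SEP M l \<phi> \<psi>"
  shows "ip M (Top A M l \<phi>) \<psi> = 0"
proof -
  have "ip M (Top A M l \<phi>) \<psi> = (1 / real l ^ CARD('d)) * (\<Sum>y\<in>tbox M. \<Sum>x\<in>tbox M. Proj A M l x \<phi> y \<bullet> \<psi> y)"
    by (simp add: ip_def Top_def inner_sum_left sum_distrib_left)
  also have "(\<Sum>y\<in>tbox M. \<Sum>x\<in>tbox M. Proj A M l x \<phi> y \<bullet> \<psi> y) = (\<Sum>x\<in>tbox M. \<Sum>y\<in>tbox M. Proj A M l x \<phi> y \<bullet> \<psi> y)"
    by (rule sum.swap)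
  also have "\<dots> = 0" using Proj_ip_zero[OF sep] unfolding ip_def by simp
  finally show ?thesis by simp
qed

lemma ip_zero_sep:
  fixes \<phi> \<psi> :: "int^'d \<Rightarrow> real^'m"
  assumes sep: "SEP M l \<phi> \<psi>"
  shows "ip M \<phi> \<psi> = 0"
  unfolding ip_def
proof (rule sum.neutral, rule ballI)
  fix a :: "int^'d" assume "a \<in> tbox M"
  show "\<phi> a \<bullet> \<psi> a = 0"
  proof (rule ccontr)
    assume "\<phi> a \<bullet> \<psi> a \<noteq> 0"
    then have "\<phi> a \<noteq> 0" "\<psi> a \<noteq> 0" by auto
    moreover have "cong_tor M (a - a) 0" by (simp add: cong_refl)
    ultimately obtain j where "int l \<le> \<bar>(0::int^'d)$j\<bar>" using sep unfolding SEP_def by blast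
    then show False using l2 by simp
  qed
qed

lemma Rop_ip_zero:
  fixes \<phi> \<psi> :: "int^'d \<Rightarrow> real^'m"
  assumes sep: "SEP M l \<phi> \<psi>"
  shows "ip M (Rop A M l \<phi>) \<psi> = 0"
proof -
  have "ip M (Rop A M l \<phi>) \<psi> = ip M \<phi> \<psi> - ip M (Top A M l \<phi>) \<psi>"
    by (simp add: ip_def Rop_def inner_diff_left sum_subtractf)
  then show ?thesis using ip_zero_sep[OF sep] Top_ip_zero[OF sep] by simp
qed

end



context S begin

definition bz :: "((int^'d) \<times> 'm) \<Rightarrow> int^'d \<Rightarrow> real^'m" where
  "bz k = (\<lambda>w. (ind M w (fst k) - ind M w 0) *\<^sub>R axis (snd k) 1)"

lemma sum_ind_tbox:
  fixes \<psi> :: "int^'d \<Rightarrow> real^'m" and w :: "int^'d"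
  assumes per: "periodic_tor M \<psi>"
  shows "(\<Sum>z\<in>tbox M. ind M w z *\<^sub>R \<psi> z) = \<psi> w"
proof -
  have "(\<Sum>z\<in>tbox M. ind M w z *\<^sub>R \<psi> z) = (\<Sum>z\<in>tbox M. if z = vmod M w then \<psi> z else 0)"
  proof (rule sum.cong[OF refl])
    fix z :: "int^'d" assume "z \<in> tbox M"
    then have "cong_tor M w z \<longleftrightarrow> z = vmod M w" using cong_vmod_eq tbox_vmod by metis
    then show "ind M w z *\<^sub>R \<psi> z = (if z = vmod M w then \<psi> z else 0)" by (simp add: ind_def)
  qed
  also have "\<dots> = \<psi> (vmod M w)" using vmod_tbox[OF Mpos, of w] by (subst sum.delta) (rule finite_tbox, simp)
  also have "\<dots> = \<psi> w" using periodic_vmod[OF per] by simp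
  finally show ?thesis .
qed

lemma XN_expand:
  fixes \<psi> :: "int^'d \<Rightarrow> real^'m"
  assumes "\<psi> \<in> XN M"
  shows "\<psi> = (\<lambda>w. \<Sum>k\<in>tbox M \<times> (UNIV::'m set). (\<psi> (fst k) $ snd k) *\<^sub>R bz k w)"
proof
  fix w :: "int^'d"
  have per: "periodic_tor M \<psi>" and s0: "(\<Sum>z\<in>tbox M. \<psi> z) = 0" using assms by (auto simp: XN_def)
  have "(\<Sum>k\<in>tbox M \<times> (UNIV::'m set). (\<psi> (fst k) $ snd k) *\<^sub>R bz k w)
     = (\<Sum>z\<in>tbox M. \<Sum>i\<in>UNIV. (\<psi> z $ i) *\<^sub>R bz (z, i) w)"
    by (simp add: sum.cartesian_product split_def)
  also have "\<dots> = (\<Sum>z\<in>tbox M. (ind M w z - ind M w 0) *\<^sub>R \<psi> z)"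
  proof (rule sum.cong[OF refl])
    fix z :: "int^'d"
    have "(\<Sum>i\<in>UNIV. (\<psi> z $ i) *\<^sub>R bz (z, i) w)
        = (ind M w z - ind M w 0) *\<^sub>R (\<Sum>i\<in>UNIV. (\<psi> z $ i) *\<^sub>R axis i (1::real))"
      by (simp add: bz_def scaleR_sum_right mult.commute)
    also have "(\<Sum>i\<in>UNIV. (\<psi> z $ i) *\<^sub>R axis i (1::real)) = \<psi> z"
      using basis_expansion[of "\<psi> z"] by (simp add: scalar_mult_eq_scaleR)
    finally show "(\<Sum>i\<in>UNIV. (\<psi> z $ i) *\<^sub>R bz (z, i) w) = (ind M w z - ind M w 0) *\<^sub>R \<psi> z" .
  qed
  also have "\<dots> = (\<Sum>z\<in>tbox M. ind M w z *\<^sub>R \<psi> z) - ind M w 0 *\<^sub>R (\<Sum>z\<in>tbox M. \<psi> z)"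
    by (simp add: scaleR_diff_left sum_subtractf scaleR_sum_right)
  also have "\<dots> = \<psi> w" using sum_ind_tbox[OF per] s0 by simp
  finally show "\<psi> w = (\<Sum>k\<in>tbox M \<times> (UNIV::'m set). (\<psi> (fst k) $ snd k) *\<^sub>R bz k w)" by simp
qed

lemma XN_uniq:
  fixes \<eta>1 \<eta>2 :: "int^'d \<Rightarrow> real^'m"
  assumes "\<eta>1 \<in> XN M" "\<eta>2 \<in> XN M" "\<forall>\<psi>\<in>XN M. ip M \<eta>1 \<psi> = ip M \<eta>2 \<psi>"
  shows "\<eta>1 = \<eta>2"
proof -
  define d where "d = (\<lambda>y. 1 *\<^sub>R \<eta>1 y + (-1) *\<^sub>R \<eta>2 y)"
  have dm: "d \<in> XN M" unfolding d_def by (rule XN_lc[OF assms(1,2)])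
  have "ip M d d = ip M \<eta>1 d - ip M \<eta>2 d"
    by (simp add: d_def ip_def inner_diff_left sum_subtractf)
  then have z: "ip M d d = 0" using assms(3) dm by simp
  have "\<forall>y\<in>tbox M. d y \<bullet> d y = 0"
    using z sum_nonneg_eq_0_iff[of "tbox M" "\<lambda>y. d y \<bullet> d y"] finite_tbox[of M] unfolding ip_def by simp
  then have "\<forall>y\<in>tbox M. d y = 0" by simp
  moreover have "periodic_tor M d" using dm by (simp add: XN_def)
  ultimately have "d y = 0" for y using periodic_vmod vmod_tbox[OF Mpos] by metis
  then show ?thesis by (simp add: d_def fun_eq_iff)
qed

lemma adj_prop:
  fixes Op :: "(int^'d \<Rightarrow> real^'m) \<Rightarrow> (int^'d \<Rightarrow> real^'m)" and \<phi> :: "int^'d \<Rightarrow> real^'m"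
  assumes Oplin: "\<And>u v \<alpha> \<beta>. Op (\<lambda>y. \<alpha> *\<^sub>R u y + \<beta> *\<^sub>R v y) = (\<lambda>y. \<alpha> *\<^sub>R Op u y + \<beta> *\<^sub>R Op v y)"
  shows "adj M Op \<phi> \<in> XN M \<and> (\<forall>\<psi>\<in>XN M. ip M (adj M Op \<phi>) \<psi> = ip M \<phi> (Op \<psi>))"
proof -
  define F where "F = (\<lambda>\<psi>. ip M \<phi> (Op \<psi>))"
  have linF: "lin F"
    unfolding lin_def F_def Oplin
    by (simp add: ip_def inner_add_right sum.distrib sum_distrib_left)
  define \<eta>0 where "\<eta>0 = (\<lambda>y. \<Sum>i\<in>UNIV. F (bz (vmod M y, i)) *\<^sub>R (axis i 1 :: real^'m))"
  define C where "C = (1 / real (card (tbox M :: (int^'d) set))) *\<^sub>R (\<Sum>w\<in>tbox M. \<eta>0 w)"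
  define \<eta> where "\<eta> = (\<lambda>y. \<eta>0 y - C)"
  have card0: "card (tbox M :: (int^'d) set) > 0"
    using vmod_tbox[OF Mpos, of 0] finite_tbox[of M] card_gt_0_iff by blast
  have ex: "\<eta> \<in> XN M \<and> (\<forall>\<psi>\<in>XN M. ip M \<eta> \<psi> = F \<psi>)"
  proof
    have vm: "vmod M (y + of_nat M * ej j) = vmod M y" for y j
      using cong_period cong_vmod_eq by metis
    have per: "periodic_tor M \<eta>" unfolding periodic_tor_def \<eta>_def \<eta>0_def vm by simp
    have "(\<Sum>y\<in>tbox M. \<eta> y) = (\<Sum>y\<in>tbox M. \<eta>0 y) - real (card (tbox M :: (int^'d) set)) *\<^sub>R C"
      by (simp del: sum_constant add: \<eta>_def sum_subtractf sum_constant_scaleR)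
    also have "\<dots> = 0" using card0 by (simp add: C_def)
    finally show "\<eta> \<in> XN M" using per by (simp add: XN_def)
  next
    show "\<forall>\<psi>\<in>XN M. ip M \<eta> \<psi> = F \<psi>"
    proof
      fix \<psi> :: "int^'d \<Rightarrow> real^'m" assume ps: "\<psi> \<in> XN M"
      have s0: "(\<Sum>y\<in>tbox M. \<psi> y) = 0" using ps by (simp add: XN_def)
      have "ip M \<eta> \<psi> = (\<Sum>y\<in>tbox M. \<eta>0 y \<bullet> \<psi> y) - C \<bullet> (\<Sum>y\<in>tbox M. \<psi> y)"
        by (simp add: ip_def \<eta>_def inner_diff_left sum_subtractf inner_sum_right)
      also have "\<dots> = (\<Sum>y\<in>tbox M. \<eta>0 y \<bullet> \<psi> y)" using s0 by simp
      also have "\<dots> = (\<Sum>y\<in>tbox M. \<Sum>i\<in>UNIV. (\<psi> y $ i) * F (bz (y, i)))"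
      proof (rule sum.cong[OF refl])
        fix y :: "int^'d" assume "y \<in> tbox M"
        then have "vmod M y = y" by (rule tbox_vmod)
        then show "\<eta>0 y \<bullet> \<psi> y = (\<Sum>i\<in>UNIV. (\<psi> y $ i) * F (bz (y, i)))"
          by (simp add: \<eta>0_def inner_sum_left inner_axis' mult.commute)
      qed
      also have "\<dots> = (\<Sum>k\<in>tbox M \<times> (UNIV::'m set). (\<psi> (fst k) $ snd k) * F (bz k))"
        by (simp add: sum.cartesian_product split_def)
      also have "\<dots> = F (\<lambda>w. \<Sum>k\<in>tbox M \<times> (UNIV::'m set). (\<psi> (fst k) $ snd k) *\<^sub>R bz k w)"
        by (rule lin_sum[OF linF, symmetric]) (simp add: finite_tbox)
      also have "\<dots> = F \<psi>" using XN_expand[OF ps] by simp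
      finally show "ip M \<eta> \<psi> = F \<psi>" .
    qed
  qed
  have "\<exists>!\<eta>. \<eta> \<in> XN M \<and> (\<forall>\<psi>\<in>XN M. ip M \<eta> \<psi> = ip M \<phi> (Op \<psi>))"
  proof (rule ex1I[of _ \<eta>])
    show "\<eta> \<in> XN M \<and> (\<forall>\<psi>\<in>XN M. ip M \<eta> \<psi> = ip M \<phi> (Op \<psi>))" using ex by (simp add: F_def)
  next
    fix \<eta>' :: "int^'d \<Rightarrow> real^'m" assume h: "\<eta>' \<in> XN M \<and> (\<forall>\<psi>\<in>XN M. ip M \<eta>' \<psi> = ip M \<phi> (Op \<psi>))"
    show "\<eta>' = \<eta>" using XN_uniq[of \<eta>' \<eta>] h ex by (simp add: F_def)
  qed
  then show ?thesis unfolding adj_def by (rule theI')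
qed

end



lemma supnorm_ge: "\<bar>v$j\<bar> \<le> supnorm (v::int^'d::finite)"
  unfolding supnorm_def by (rule Max_ge) auto

lemma supnorm_attained: "\<exists>j. supnorm (v::int^'d::finite) = \<bar>v$j\<bar>"
proof -
  have "supnorm v \<in> range (\<lambda>j. \<bar>v$j\<bar>)" unfolding supnorm_def by (rule Max_in) auto
  then show ?thesis by auto
qed

lemma rho_le: "rho M a b \<le> supnorm (a - b + of_nat M * (z::int^'d::finite))"
  unfolding rho_def
proof (rule cInf_lower)
  show "supnorm (a - b + of_nat M * z) \<in> {supnorm (a - b + of_nat M * z) |z. True}" by blast
  show "bdd_below {supnorm (a - b + of_nat M * z) |z. True}"
  proof (rule bdd_belowI[of _ 0])
    fix s assume "s \<in> {supnorm (a - b + of_nat M * z) |z. True}"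
    then obtain z' :: "int^'d" where s: "s = supnorm (a - b + of_nat M * z')" by blast
    have "0 \<le> \<bar>(a - b + of_nat M * z') $ undefined\<bar>" by simp
    also have "\<dots> \<le> s" unfolding s by (rule supnorm_ge)
    finally show "0 \<le> s" .
  qed
qed

lemma sep_from_dist:
  fixes \<phi> \<psi> :: "int^'d::finite \<Rightarrow> real^'m::finite"
  assumes Mpos: "M > 0" and perp: "periodic_tor M \<phi>" and pers: "periodic_tor M \<psi>"
    and dist: "dist_inf M (suppT M \<phi>) (suppT M \<psi>) > ereal (real l - 1)"
  shows "SEP M l \<phi> \<psi>"
  unfolding SEP_def
proof (intro allI impI)
  fix a b v :: "int^'d"
  assume pa: "\<phi> a \<noteq> 0" and pb: "\<psi> b \<noteq> 0" and cg: "cong_tor M (a - b) v"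
  define a' where "a' = vmod M a"
  define b' where "b' = vmod M b"
  have sa: "a' \<in> suppT M \<phi>" using pa periodic_vmod[OF perp, of a] vmod_tbox[OF Mpos, of a]
    by (simp add: suppT_def a'_def)
  have sb: "b' \<in> suppT M \<psi>" using pb periodic_vmod[OF pers, of b] vmod_tbox[OF Mpos, of b]
    by (simp add: suppT_def b'_def)
  have "dist_inf M (suppT M \<phi>) (suppT M \<psi>) \<le> ereal (real_of_int (rho M a' b'))"
    unfolding dist_inf_def by (rule Inf_lower) (use sa sb in blast)
  then have "ereal (real l - 1) < ereal (real_of_int (rho M a' b'))" using dist less_le_trans by blast
  then have "real l - 1 < real_of_int (rho M a' b')" by simp
  then have rl: "int l \<le> rho M a' b'" by linarith
  define z :: "int^'d" where "z = (\<chi> j. (v$j - (a'$j - b'$j)) div int M)"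
  have dv: "int M dvd (v$j - (a'$j - b'$j))" for j
  proof -
    have "(a$j - b$j) mod int M = v$j mod int M" using cg by (simp add: cong_tor_def)
    moreover have "(a'$j - b'$j) mod int M = (a$j - b$j) mod int M"
      by (simp add: a'_def b'_def vmod_def mod_diff_eq)
    ultimately have "v$j mod int M = (a'$j - b'$j) mod int M" by simp
    then show ?thesis by (simp add: mod_eq_dvd_iff)
  qed
  have veq: "a' - b' + of_nat M * z = v"
  proof (subst vec_eq_iff, rule allI)
    fix j
    have "int M * ((v$j - (a'$j - b'$j)) div int M) = v$j - (a'$j - b'$j)"
      by (rule dvd_mult_div_cancel[OF dv])
    then show "(a' - b' + of_nat M * z) $ j = v $ j" by (simp add: z_def of_nat_index)
  qed
  have "int l \<le> supnorm v" using rl rho_le[of M a' b' z] veq by simp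
  moreover obtain j where "supnorm v = \<bar>v$j\<bar>" using supnorm_attained by blast
  ultimately show "\<exists>j. int l \<le> \<bar>v$j\<bar>" by auto
qed

lemma SEP_swap:
  assumes "SEP M l \<phi> \<psi>" shows "SEP M l \<psi> \<phi>"
  unfolding SEP_def
proof (intro allI impI)
  fix a b v
  assume h: "\<psi> a \<noteq> 0" "\<phi> b \<noteq> 0" "cong_tor M (a - b) v"
  have "cong_tor M (b - a) (- v)"
  proof -
    have "\<forall>j. int M dvd ((a - b)$j - v$j)" using h(3) by (simp add: cong_tor_iff_dvd)
    then have "\<forall>j. int M dvd ((b - a)$j - (- v)$j)"
      by (metis (no_types, lifting) dvd_minus_iff minus_diff_eq diff_minus_eq_add vector_minus_component vector_uminus_component add.commute diff_conv_add_uminus)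
    then show ?thesis by (simp add: cong_tor_iff_dvd)
  qed
  then obtain j where "int l \<le> \<bar>(- v)$j\<bar>" using assms h(1,2) unfolding SEP_def by blast
  then show "\<exists>j. int l \<le> \<bar>v$j\<bar>" by auto
qed

theorem lemma3p7:
  fixes A :: "real^'d::finite^'m::finite \<Rightarrow> real^'d^'m"
    and L N l :: nat and c0 :: real
    and \<phi> \<psi> :: "int^'d \<Rightarrow> real^'m"
  assumes "CARD('d) \<ge> 2" and "L \<ge> 3" and "odd L" and "N \<ge> 1"
    and "linear A"
    and "\<forall>F G. A F \<bullet> G = F \<bullet> A G"
    and "c0 > 0" and "\<forall>F. A F \<bullet> F \<ge> c0 * (norm F)\<^sup>2"
    and "l \<ge> 3" and "l - 1 < L ^ N"
    and "\<phi> \<in> XN (L ^ N)" and "\<psi> \<in> XN (L ^ N)"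
    and "dist_inf (L ^ N) (suppT (L ^ N) \<phi>) (suppT (L ^ N) \<psi>) > ereal (real l - 1)"
  shows "ip (L ^ N) (Top A (L ^ N) l \<phi>) \<psi> = 0
       \<and> ip (L ^ N) (adj (L ^ N) (Top A (L ^ N) l) \<phi>) \<psi> = 0
       \<and> ip (L ^ N) (Rop A (L ^ N) l \<phi>) \<psi> = 0
       \<and> ip (L ^ N) (adj (L ^ N) (Rop A (L ^ N) l) \<phi>) \<psi> = 0"
proof -
  have Mpos: "L ^ N > 0" using assms(2) by simp
  have "int (l - 1) < int (L ^ N)" using assms(10) by linarith
  then have lM: "int l - 1 < int (L ^ N)" using assms(9) by (simp add: of_nat_diff)
  interpret S A "L ^ N" l c0
    by (rule S.intro[OF Mpos _ lM assms(5) assms(6) assms(7) assms(8)]) (use assms(9) in simp)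
  have perp: "periodic_tor (L ^ N) \<phi>" using assms(11) by (simp add: XN_def)
  have pers: "periodic_tor (L ^ N) \<psi>" using assms(12) by (simp add: XN_def)
  have sep1: "SEP (L ^ N) l \<phi> \<psi>" by (rule sep_from_dist[OF Mpos perp pers assms(13)])
  have sep2: "SEP (L ^ N) l \<psi> \<phi>" by (rule SEP_swap[OF sep1])
  have ipc: "ip (L ^ N) u w = ip (L ^ N) w u" for u w :: "int^'d \<Rightarrow> real^'m"
    by (simp add: ip_def inner_commute)
  have t1: "ip (L ^ N) (Top A (L ^ N) l \<phi>) \<psi> = 0" by (rule Top_ip_zero[OF sep1])
  have t2: "ip (L ^ N) (adj (L ^ N) (Top A (L ^ N) l) \<phi>) \<psi> = 0"
  proof -
    have "ip (L ^ N) (adj (L ^ N) (Top A (L ^ N) l) \<phi>) \<psi> = ip (L ^ N) \<phi> (Top A (L ^ N) l \<psi>)"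
      using adj_prop[of "Top A (L ^ N) l" \<phi>, OF Top_lin] assms(12) by blast
    also have "\<dots> = ip (L ^ N) (Top A (L ^ N) l \<psi>) \<phi>" by (rule ipc)
    also have "\<dots> = 0" by (rule Top_ip_zero[OF sep2])
    finally show ?thesis .
  qed
  have t3: "ip (L ^ N) (Rop A (L ^ N) l \<phi>) \<psi> = 0" by (rule Rop_ip_zero[OF sep1])
  have t4: "ip (L ^ N) (adj (L ^ N) (Rop A (L ^ N) l) \<phi>) \<psi> = 0"
  proof -
    have "ip (L ^ N) (adj (L ^ N) (Rop A (L ^ N) l) \<phi>) \<psi> = ip (L ^ N) \<phi> (Rop A (L ^ N) l \<psi>)"
      using adj_prop[of "Rop A (L ^ N) l" \<phi>, OF Rop_lin] assms(12) by blast
    also have "\<dots> = ip (L ^ N) (Rop A (L ^ N) l \<psi>) \<phi>" by (rule ipc)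
    also have "\<dots> = 0" by (rule Rop_ip_zero[OF sep2])
    finally show ?thesis .
  qed
  show ?thesis using t1 t2 t3 t4 by blast
qed



end
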